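(* Define the Genocchi medians $h_n$ ($n\ge0$) by $1+\sum_{n\ge 1}h_{n-1} t^n = t^{-1}\sum_{m\ge 1}\frac{\big((m-1)!\big)^2t^{m}}{\prod_{k=1}^m \big(1+k(k-1)t\big)}$. Then for all $n\ge 2$, $h_{n-2}$ equals the number of cycles on $[2n-1]$ with only odd-odd drops, i.e. cycles all of whose drops $(a,b)$ have both $a$ and $b$ odd.
   Context: For $N\ge1$, a cycle on $[N]=\{1,\dots,N\}$ is an equivalence class of permutations $\pi=\pi_1\cdots\pi_N$ of $[N]$ (one-line notation) under cyclic rotation of the entries; indices are read modulo $N$ (so $\pi_{N+1}=\pi_1$). A drop of a cycle is a consecutive pair $(\pi_i,\pi_{i+1})$, $1\le i\le N$, with $\pi_i>\pi_{i+1}$ (independent of the rotation chosen). A drop $(a,b)$ is odd-odd if $a$ and $b$ are both odd. *)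

theory Defs
  imports "HOL-Computational_Algebra.Formal_Power_Series"
begin

definition genocchi_term :: "nat \<Rightarrow> rat fps" where
  "genocchi_term m =
     fps_const ((fact (m - 1))^2) * fps_X ^ m *
     inverse (\<Prod>k = 1..m. 1 + of_nat (k * (k - 1)) * fps_X)"

(* S(t) = sum_{m>=1} genocchi_term m; the m-th term is O(t^m), so the coefficient of t^N
   only receives contributions from m <= N *)
definition genocchi_series :: "rat fps" where
  "genocchi_series = Abs_fps (\<lambda>N. \<Sum>m = 1..N. fps_nth (genocchi_term m) N)"

(* 1 + sum_{n>=1} h_{n-1} t^n = t^{-1} S(t), i.e. h_j = [t^(j+2)] S(t) *)
definition genocchi_median :: "nat \<Rightarrow> rat" where
  "genocchi_median j = fps_nth genocchi_series (j + 2)"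

definition perms_list :: "nat \<Rightarrow> nat list set" where
  "perms_list N = {xs. distinct xs \<and> set xs = {1..N}}"

(* a cycle = equivalence class of one-line permutations under cyclic rotation *)
definition cycles_on :: "nat \<Rightarrow> nat list set set" where
  "cycles_on N = (\<lambda>xs. {rotate k xs | k. k < N}) ` perms_list N"

definition only_odd_odd_drops :: "nat list \<Rightarrow> bool" where
  "only_odd_odd_drops xs =
     (\<forall>i < length xs. xs ! i > xs ! (Suc i mod length xs) \<longrightarrow>
        odd (xs ! i) \<and> odd (xs ! (Suc i mod length xs)))"

end

theory Submission
  imports Defs
begin


fun cc :: "nat \<Rightarrow> nat \<Rightarrow> rat" where
  "cc 0 p = (if p = 0 then 1 else 0)"
| "cc (Suc 0) p = (if p = 1 then 1 else 0)"
| "cc (Suc (Suc k)) p = of_nat (k+2) * ((if p = 0 then 0 else cc (Suc k) (p - 1)) - cc (Suc k) p)"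

lemma cc_0': "p = 0 \<Longrightarrow> cc k p = (if k = 0 then 1 else 0)"
  by (induction k p rule: cc.induct) auto
lemma cc_0: "cc k 0 = (if k = 0 then 1 else 0)" using cc_0' by simp

lemma cc_supp: "k < p \<Longrightarrow> cc k p = 0"
proof (induction k p rule: cc.induct)
  case (3 k p)
  then show ?case by (cases p) auto
qed auto

lemma cc_Suc_Suc: "k \<ge> 1 \<Longrightarrow> cc (Suc k) (Suc p) = of_nat (k+1) * (cc k p - cc k (Suc p))"
  by (cases k) auto

lemma cc_Suc_0: "cc (Suc k) 0 = 0" by (simp add: cc_0)

lemma cc_D: "k \<ge> 1 \<Longrightarrow> cc k (Suc p) = of_nat k * (cc (k-1) p - cc (k-1) (Suc p))"
proof (cases k)
  case (Suc k') then show ?thesis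
    by (cases k') auto
qed simp

lemma cc_N: "k \<ge> 1 \<Longrightarrow> of_nat (p+1) * cc k p = of_nat (k+1) * cc k p + of_nat k * (of_nat k - 1) * cc (k-1) p"
proof (induction k arbitrary: p rule: nat_induct_at_least)
  case base
  then show ?case by auto
next
  case (Suc k)
  show ?case
  proof (cases p)
    case 0 then show ?thesis using cc_0 by simp
  next
    case (Suc q)
    have h1: "cc (Suc k) (Suc q) = of_nat (k+1) * (cc k q - cc k (Suc q))" using cc_Suc_Suc Suc.hyps by simp
    have i1: "of_nat (q+1) * cc k q = of_nat (k+1) * cc k q + of_nat k * (of_nat k - 1) * cc (k-1) q" using Suc.IH[of q] by simp
    have i2: "of_nat (Suc q+1) * cc k (Suc q) = of_nat (k+1) * cc k (Suc q) + of_nat k * (of_nat k - 1) * cc (k-1) (Suc q)" using Suc.IH[of "Suc q"] by simp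
    have d: "cc k (Suc q) = of_nat k * (cc (k-1) q - cc (k-1) (Suc q))" using cc_D Suc.hyps by simp
    show ?thesis unfolding Suc using h1 i1 i2 d
      by (simp add: algebra_simps) algebra
  qed
qed

definition sh :: "(nat \<Rightarrow> rat) \<Rightarrow> nat \<Rightarrow> rat" where
  "sh f p = (if p = 0 then 0 else f (p - 1))"

lemma cc_E1: "k \<ge> 1 \<Longrightarrow> of_nat (k+1) * cc (k+1) p + 2 * of_nat k ^ 2 * cc k p + (of_nat k - 1)^2 * of_nat k * cc (k-1) p
   = of_nat p ^ 2 * sh (cc k) p - of_nat (p+1) * of_nat p * cc k p"
proof (induction k arbitrary: p rule: nat_induct_at_least)
  case base
  then show ?case by (cases p) (auto simp: sh_def cc_0 numeral_2_eq_2)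
next
  case (Suc k)
  show ?case
  proof (cases p)
    case 0 then show ?thesis by (simp add: cc_0 sh_def)
  next
    case (Suc q)
    define A0 where "A0 = cc k (Suc q)"
    define A1 where "A1 = cc k q"
    define A2 where "A2 = sh (cc k) q"
    define B0 where "B0 = cc (k-1) (Suc q)"
    define B1 where "B1 = cc (k-1) q"
    define C0 where "C0 = cc (k+1) (Suc q)"
    define C1 where "C1 = cc (k+1) q"
    define D0 where "D0 = cc (k+2) (Suc q)"
    have f1: "C0 = of_nat (k+1) * (A1 - A0)" unfolding C0_def A0_def A1_def using cc_Suc_Suc[of k q] Suc.hyps by simp
    have f2: "C1 = of_nat (k+1) * (A2 - A1)" unfolding C1_def A2_def A1_def sh_def using cc_Suc_Suc[of k "q-1"] Suc.hyps
      by (cases q) (auto simp: cc_0)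
    have f3: "D0 = of_nat (k+2) * (C1 - C0)" unfolding D0_def C0_def C1_def using cc_Suc_Suc[of "k+1" q] by simp
    define K where "K = (of_nat k :: rat)"
    define Q where "Q = (of_nat q :: rat)"
    have f1': "C0 = (K+1) * (A1 - A0)" using f1 unfolding K_def by simp
    have f2': "C1 = (K+1) * (A2 - A1)" using f2 unfolding K_def by simp
    have f3': "D0 = (K+2) * (C1 - C0)" using f3 unfolding K_def by simp
    have e1: "(K+1) * C0 + 2 * K ^ 2 * A0 + (K - 1)^2 * K * B0
       = (Q+1) ^ 2 * A1 - (Q+2) * (Q+1) * A0"
      using Suc.IH[of "Suc q"] unfolding A0_def A1_def B0_def C0_def sh_def K_def Q_def by (simp add: algebra_simps)
    have e2: "(K+1) * C1 + 2 * K ^ 2 * A1 + (K - 1)^2 * K * B1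
       = Q ^ 2 * A2 - (Q+1) * Q * A1"
      using Suc.IH[of q] unfolding A2_def A1_def B1_def C1_def K_def Q_def by (simp add: algebra_simps)
    have n1: "(Q+2) * A0 = (K+1) * A0 + K * (K - 1) * B0"
      using cc_N[of k "Suc q"] Suc.hyps unfolding A0_def B0_def K_def Q_def by (simp add: algebra_simps)
    have n2: "(Q+1) * A1 = (K+1) * A1 + K * (K - 1) * B1"
      using cc_N[of k q] Suc.hyps unfolding A1_def B1_def K_def Q_def by (simp add: algebra_simps)
    have r1: "(K + 1 + (Q+1)) * (Q * A0 - (Q - K) * A1) = 0"
    proof -
      have "(K + 1 + (Q+1)) * (Q * A0 - (Q - K) * A1) =
         ((K+1) * C0 + 2 * K ^ 2 * A0 + (K - 1)^2 * K * B0 - ((Q+1) ^ 2 * A1 - (Q+2) * (Q+1) * A0))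
         - (K+1) * (C0 - (K+1) * (A1 - A0)) + (K - 1) * ((Q+2) * A0 - ((K+1) * A0 + K * (K - 1) * B0))"
        by algebra
      also have "\<dots> = 0" using e1 f1' n1 by simp
      finally show ?thesis .
    qed
    have r1': "Q * A0 = (Q - K) * A1"
    proof -
      have "K + 1 + (Q+1) \<noteq> 0" unfolding K_def Q_def by (simp add: add_pos_pos)
      then show ?thesis using r1 by simp
    qed
    have r2: "(K + (Q+1)) * ((Q - 1) * A1 - (Q - K - 1) * A2) = 0"
    proof -
      have "(K + (Q+1)) * ((Q - 1) * A1 - (Q - K - 1) * A2) =
         ((K+1) * C1 + 2 * K ^ 2 * A1 + (K - 1)^2 * K * B1 - (Q ^ 2 * A2 - (Q+1) * Q * A1))
         - (K+1) * (C1 - (K+1) * (A2 - A1)) + (K - 1) * ((Q+1) * A1 - ((K+1) * A1 + K * (K - 1) * B1))"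
        by algebra
      also have "\<dots> = 0" using e2 f2' n2 by simp
      finally show ?thesis .
    qed
    have r2': "(Q - 1) * A1 = (Q - K - 1) * A2"
    proof -
      have "K + (Q+1) \<noteq> 0" unfolding K_def Q_def by (simp add: add_pos_pos)
      then show ?thesis using r2 by simp
    qed
    have goal0: "(K+2) * D0 + 2 * (K+1) ^ 2 * C0 + K^2 * (K+1) * A0
      - ((Q+1) ^ 2 * C1 - (Q + 2) * (Q+1) * C0) =
      (K+2) * (D0 - (K+2) * (C1 - C0)) + (2*(K+1)^2 + (Q+2)*(Q+1) - (K+2)^2) * (C0 - (K+1) * (A1 - A0))
      + ((K+2)^2 - (Q+1)^2) * (C1 - (K+1) * (A2 - A1))
      + (K+1) * (- (Q+3) * (Q * A0 - (Q - K) * A1) + (K+3+Q) * ((Q - 1) * A1 - (Q - K - 1) * A2))"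
      by algebra
    have goal1: "(K+2) * D0 + 2 * (K+1) ^ 2 * C0 + K^2 * (K+1) * A0
      - ((Q+1) ^ 2 * C1 - (Q + 2) * (Q+1) * C0) = 0"
      unfolding goal0 using f1' f2' f3' r1' r2' by simp
    have goal: "of_nat (k+2) * D0 + 2 * of_nat (k+1) ^ 2 * C0 + (of_nat k)^2 * of_nat (k+1) * A0
      = of_nat (Suc q) ^ 2 * C1 - of_nat (Suc q + 1) * of_nat (Suc q) * C0"
      using goal1 unfolding K_def Q_def by (simp add: algebra_simps)
    show ?thesis using goal unfolding Suc D0_def C0_def C1_def A0_def sh_def
      by (simp add: algebra_simps)
  qed
qed

lemma cc_E: "of_nat (k+1) * cc (k+1) p + 2 * of_nat k ^ 2 * cc k p + (of_nat k - 1)^2 * of_nat k * cc (k-1) p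
   = of_nat p ^ 2 * sh (cc k) p - of_nat (p+1) * of_nat p * cc k p"
proof (cases "k = 0")
  case True
  then show ?thesis by (cases p) (auto simp: sh_def cc_0)
qed (use cc_E1 in auto)




fun FF :: "nat \<Rightarrow> nat \<Rightarrow> nat" where
  "FF 0 h = (if h = 0 then 1 else 0)"
| "FF (Suc j) h = (if odd (Suc j) then (if h = 0 then 0 else FF j (h - 1)) + 2*h*FF j h + h*(h+1)*FF j (Suc h) else h * FF j h)"

lemma FF_supp: "j < h \<Longrightarrow> FF j h = 0"
  by (induction j arbitrary: h) auto

lemma FF_zero: "j \<ge> 1 \<Longrightarrow> FF j 0 = 0"
  by (cases j) auto

definition GG :: "nat \<Rightarrow> nat \<Rightarrow> rat" where "GG i h = of_nat (FF (2*i) h)"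

lemma GG_Suc: "GG (Suc i) h = of_nat h * sh (GG i) h + 2 * of_nat h ^ 2 * GG i h + of_nat h ^ 2 * of_nat (h+1) * GG i (Suc h)"
proof -
  have "2 * Suc i = Suc (Suc (2*i))" by simp
  then show ?thesis unfolding GG_def sh_def
    by (cases h) (simp_all add: algebra_simps power2_eq_square)
qed

lemma FF_supp2: "(j+1) div 2 < h \<Longrightarrow> FF j h = 0"
proof (induction j arbitrary: h)
  case (Suc j)
  then show ?case by (cases h) auto
qed auto

lemma GG_supp: "i < h \<Longrightarrow> GG i h = 0"
  unfolding GG_def using FF_supp2[of "2*i" h] by simp

fun ww :: "nat \<Rightarrow> nat \<Rightarrow> rat" where
  "ww 0 p = (if p = 0 then 1 else 0)"
| "ww (Suc i) p = of_nat p ^ 2 * sh (ww i) p - of_nat (p+1) * of_nat p * ww i p"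

lemma Phi: "i + 1 < K \<Longrightarrow> (\<Sum>h<K. cc h p * GG i h) = ww i p"
proof (induction i arbitrary: K p)
  case 0
  then obtain K' where K: "K = Suc (Suc K')"
  proof -
    have "K = Suc (Suc (K - 2))" using 0 by simp
    then show ?thesis using that by blast
  qed
  have "(\<Sum>h<K. cc h p * GG 0 h) = cc 0 p * GG 0 0"
    unfolding K by (simp add: sum.lessThan_Suc_shift GG_supp del: sum.lessThan_Suc)
  then show ?case by (simp add: GG_def)
next
  case (Suc i)
  obtain K' where K: "K = Suc K'" using Suc.prems by (cases K) auto
  have z: "\<And>h. h \<ge> i + 1 \<Longrightarrow> GG i h = 0" using GG_supp by simp
  define E where "E h = of_nat (h+1) * cc (h+1) p + 2 * of_nat h ^ 2 * cc h p + (of_nat h - 1)^2 * of_nat h * cc (h-1) p" for h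
  have s1: "(\<Sum>h<K. cc h p * (of_nat h * sh (GG i) h)) = (\<Sum>h<K. of_nat (h+1) * cc (h+1) p * GG i h)"
  proof -
    have "(\<Sum>h<K. cc h p * (of_nat h * sh (GG i) h)) = (\<Sum>h<K'. of_nat (h+1) * cc (h+1) p * GG i h)"
      unfolding K by (simp add: sum.lessThan_Suc_shift sh_def mult_ac del: sum.lessThan_Suc)
    also have "\<dots> = (\<Sum>h<K. of_nat (h+1) * cc (h+1) p * GG i h)"
      unfolding K using z Suc.prems K by simp
    finally show ?thesis .
  qed
  define V where "V h = cc (h-1) p * (of_nat h - 1)^2 * of_nat h * GG i h" for h
  have s3: "(\<Sum>h<K. cc h p * (of_nat h ^ 2 * of_nat (h+1) * GG i (Suc h))) = (\<Sum>h<K. V h)"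
  proof -
    have "(\<Sum>h<Suc K. V h) = V 0 + (\<Sum>h<K. V (Suc h))" by (rule sum.lessThan_Suc_shift)
    also have "\<dots> = (\<Sum>h<K. cc h p * (of_nat h ^ 2 * of_nat (h+1) * GG i (Suc h)))"
      unfolding V_def by (simp add: algebra_simps)
    finally have "(\<Sum>h<K. cc h p * (of_nat h ^ 2 * of_nat (h+1) * GG i (Suc h))) = (\<Sum>h<Suc K. V h)" by simp
    also have "\<dots> = (\<Sum>h<K. V h)" using z[of K] Suc.prems unfolding V_def by simp
    finally show ?thesis .
  qed
  have "(\<Sum>h<K. cc h p * GG (Suc i) h) = (\<Sum>h<K. cc h p * (of_nat h * sh (GG i) h))
     + (\<Sum>h<K. cc h p * (2 * of_nat h ^ 2 * GG i h)) + (\<Sum>h<K. cc h p * (of_nat h ^ 2 * of_nat (h+1) * GG i (Suc h)))"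
    unfolding GG_Suc by (simp add: sum.distrib algebra_simps)
  also have "\<dots> = (\<Sum>h<K. GG i h * E h)"
    unfolding s1 s3 E_def V_def by (simp add: sum.distrib[symmetric] algebra_simps)
  also have "\<dots> = (\<Sum>h<K. GG i h * (of_nat p ^ 2 * sh (cc h) p - of_nat (p+1) * of_nat p * cc h p))"
    unfolding E_def using cc_E by simp
      
  also have "\<dots> = of_nat p ^ 2 * sh (\<lambda>p. \<Sum>h<K. cc h p * GG i h) p - of_nat (p+1) * of_nat p * (\<Sum>h<K. cc h p * GG i h)"
    by (simp add: sh_def sum_distrib_left sum_subtractf algebra_simps)
  also have "\<dots> = ww (Suc i) p"
    using Suc.IH[of K] Suc.prems by (simp add: sh_def)
  finally show ?case .
qed

lemma colsum: "k < P \<Longrightarrow> (\<Sum>p<P. cc k p) = (if k \<le> 1 then 1 else 0)"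
proof (induction k arbitrary: P rule: less_induct)
  case (less k)
  show ?case
  proof (cases k)
    case 0
    then obtain P' where "P = Suc P'" using less.prems by (cases P) auto
    then show ?thesis using 0 by (simp only: sum.lessThan_Suc_shift) simp
  next
    case (Suc k1)
    show ?thesis
    proof (cases k1)
      case 0
      then obtain P' where P: "P = Suc (Suc P')" proof -
        have "P = Suc (Suc (P - 2))" using less.prems Suc 0 by simp
        then show ?thesis using that by blast
      qed
      then show ?thesis using Suc 0 by (simp only: sum.lessThan_Suc_shift) simp
    next
      case (Suc k2)
      note k = \<open>k = Suc k1\<close> Suc
      obtain P' where P: "P = Suc P'" using less.prems by (cases P) auto
      have a: "(\<Sum>p<P. (if p = 0 then 0 else cc (Suc k2) (p - 1))) = (\<Sum>p<P'. cc (Suc k2) p)"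
        unfolding P by (simp only: sum.lessThan_Suc_shift) simp
      have b: "(\<Sum>p<P. cc (Suc k2) p) = (\<Sum>p<P'. cc (Suc k2) p)"
      proof -
        have "cc (Suc k2) P' = 0" using cc_supp[of "Suc k2" P'] less.prems P k by simp
        then show ?thesis unfolding P by simp
      qed
      have c: "\<And>p. cc (Suc (Suc k2)) p = of_nat (k2+2) * ((if p = 0 then 0 else cc (Suc k2) (p - 1)) - cc (Suc k2) p)"
        by simp
      have "(\<Sum>p<P. cc (Suc (Suc k2)) p) = of_nat (k2+2) * ((\<Sum>p<P. (if p = 0 then 0 else cc (Suc k2) (p - 1))) - (\<Sum>p<P. cc (Suc k2) p))"
        unfolding c sum_distrib_left[symmetric] sum_subtractf by simp
      then show ?thesis using a b k by simp
    qed
  qed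
qed


lemma ww_sum: "i \<ge> 1 \<Longrightarrow> (\<Sum>p<i+3. ww i p) = GG i 1"
proof -
  assume i: "i \<ge> 1"
  have "(\<Sum>p<i+3. ww i p) = (\<Sum>p<i+3. \<Sum>h<i+2. cc h p * GG i h)"
    using Phi[of i "i+2"] by simp
  also have "\<dots> = (\<Sum>h<i+2. GG i h * (\<Sum>p<i+3. cc h p))"
    by (subst sum.swap) (simp add: sum_distrib_left algebra_simps)
  also have "\<dots> = (\<Sum>h<i+2. GG i h * (if h \<le> 1 then 1 else 0))"
    by (rule sum.cong) (auto simp: colsum)
  also have "\<dots> = GG i 0 + GG i 1"
  proof -
    obtain i' where "i + 2 = Suc (Suc i')" by simp
    then show ?thesis by (simp add: sum.lessThan_Suc_shift del: sum.lessThan_Suc)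
  qed
  also have "\<dots> = GG i 1" using FF_zero[of "2*i"] i by (simp add: GG_def)
  finally show ?thesis .
qed


unbundle fps_syntax

definition PP :: "nat \<Rightarrow> rat fps" where
  "PP m = (\<Prod>k = 1..m. 1 + of_nat (k * (k - 1)) * fps_X)"

definition aa :: "nat \<Rightarrow> nat \<Rightarrow> rat" where
  "aa m j = fps_nth (inverse (PP m)) j"

lemma PP_0: "PP 0 = 1" by (simp add: PP_def)

lemma PP_Suc': "PP (Suc m) = PP m * (1 + of_nat (Suc m * (Suc m - 1)) * fps_X)"
  by (simp only: PP_def prod.cl_ivl_Suc) simp
lemma PP_Suc: "PP (Suc m) = PP m * (1 + of_nat (Suc m * m) * fps_X)"
  using PP_Suc' by (simp only: diff_Suc_1)

lemma PP_nth0: "PP m $ 0 = 1"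
  by (induction m) (simp_all add: PP_0 PP_Suc)

lemma aa_0_j: "aa 0 j = (if j = 0 then 1 else 0)"
  by (simp add: aa_def PP_0)

lemma aa_rec: "aa m j = aa (Suc m) j + (if j = 0 then 0 else of_nat (Suc m * m) * aa (Suc m) (j - 1))"
proof -
  define c :: "rat fps" where "c = 1 + of_nat (Suc m * m) * fps_X"
  have c0: "c $ 0 = 1" by (simp add: c_def)
  have "inverse (PP (Suc m)) * c = inverse (PP m) * (inverse c * c)"
    unfolding PP_Suc c_def[symmetric] fps_inverse_mult by (simp add: mult_ac)
  also have "inverse c * c = 1" using c0 by (intro inverse_mult_eq_1) simp
  finally have e: "inverse (PP m) = inverse (PP (Suc m)) * c" by simp
  have "of_nat (Suc m * m) * fps_X = fps_const (of_nat (Suc m * m) :: rat) * fps_X"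
    by (simp only: fps_of_nat)
  then have "inverse (PP (Suc m)) * c = inverse (PP (Suc m)) + fps_const (of_nat (Suc m * m)) * (inverse (PP (Suc m)) * fps_X)"
    unfolding c_def by (simp add: algebra_simps)
  then show ?thesis unfolding aa_def e by simp
qed

lemma aa_j0: "aa m 0 = 1"
proof (induction m)
  case 0 then show ?case by (simp add: aa_0_j)
next
  case (Suc m) then show ?case using aa_rec[of m 0] by simp
qed

lemma aa_1: "aa (Suc 0) j = (if j = 0 then 1 else 0)"
  using aa_rec[of 0 j] aa_0_j[of j] by simp

lemma ww_closed: "ww i p = (if p \<le> i then (fact p)^2 * aa (p+1) (i-p) else 0)"
proof (induction i arbitrary: p)
  case 0
  then show ?case by (simp add: aa_j0)
next
  case (Suc i)
  show ?case
  proof (cases p)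
    case 0
    then show ?thesis by (simp add: sh_def aa_1)
  next
    case (Suc p')
    have sh: "sh (ww i) p = (if p' \<le> i then (fact p')^2 * aa p (i-p') else 0)"
      using Suc.IH[of p'] Suc by (simp add: sh_def)
    consider "p \<le> i" | "p = Suc i" | "p > Suc i" by linarith
    then show ?thesis
    proof cases
      case 1
      have r: "aa p (Suc i - p) = aa (p+1) (Suc i - p) + of_nat ((p+1) * p) * aa (p+1) (i - p)"
        using aa_rec[of p "Suc i - p"] 1 by (simp add: Suc_diff_le)
      have f: "(fact p :: rat) = of_nat p * fact p'" using Suc by simp
      have "ww (Suc i) p = of_nat p ^ 2 * ((fact p')^2 * aa p (i-p')) - of_nat (p+1) * of_nat p * ((fact p)^2 * aa (p+1) (i-p))"
        using sh Suc.IH[of p] 1 Suc by simp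
      also have "\<dots> = (fact p)^2 * (aa p (Suc i - p) - of_nat ((p+1) * p) * aa (p+1) (i - p))"
        using Suc 1 f by (simp add: algebra_simps power2_eq_square)
      also have "\<dots> = (fact p)^2 * aa (p+1) (Suc i - p)" using r by simp
      finally show ?thesis using 1 by simp
    next
      case 2
      have "ww (Suc i) p = of_nat p ^ 2 * ((fact p')^2 * aa p 0)"
        using sh Suc.IH[of p] 2 Suc by simp
      also have "\<dots> = (fact p)^2" using Suc by (simp add: aa_j0 power_mult_distrib)
      finally show ?thesis using 2 by (simp add: aa_j0)
    next
      case 3
      then show ?thesis using sh Suc.IH[of p] Suc by simp
    qed
  qed
qed

lemma term_nth: "1 \<le> m \<Longrightarrow> m \<le> N \<Longrightarrow> genocchi_term m $ N = (fact (m-1))^2 * aa m (N - m)"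
  unfolding genocchi_term_def aa_def PP_def
  by (simp add: mult.assoc fps_X_power_mult_nth)

lemma median_eq: "n \<ge> 2 \<Longrightarrow> genocchi_median (n - 2) = GG (n - 1) 1"
proof -
  assume n: "n \<ge> 2"
  have nn: "n - 2 + 2 = n" using n by simp
  have "genocchi_median (n - 2) = (\<Sum>m = 1..n. genocchi_term m $ n)"
    unfolding genocchi_median_def genocchi_series_def nn by simp
  also have "\<dots> = (\<Sum>m = 1..n. (fact (m-1))^2 * aa m (n - m))"
    by (rule sum.cong) (auto simp: term_nth)
  also have "\<dots> = (\<Sum>p<n. (fact p)^2 * aa (p+1) (n - 1 - p))"
  proof -
    have "(\<Sum>m = 1..n. (fact (m-1))^2 * aa m (n - m)) = (\<Sum>p = 0..n-1. (fact p)^2 * aa (p+1) (n - 1 - p))"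
      using n by (intro sum.reindex_bij_witness[where i="\<lambda>p. p+1" and j="\<lambda>m. m - 1"]) auto
    then show ?thesis using n by (simp add: atLeast0AtMost lessThan_Suc_atMost[symmetric])
  qed
  also have "\<dots> = (\<Sum>p<n. ww (n-1) p)"
    by (rule sum.cong) (auto simp: ww_closed)
  also have "\<dots> = (\<Sum>p<(n-1)+3. ww (n-1) p)"
  proof -
    have "(n-1)+3 = Suc (Suc n)" using n by simp
    then show ?thesis by (simp add: ww_closed)
  qed
  also have "\<dots> = GG (n-1) 1" using ww_sum[of "n-1"] n by simp
  finally show ?thesis .
qed



fun dok :: "nat list \<Rightarrow> bool" where
  "dok (x # y # r) = ((y < x \<longrightarrow> odd x \<and> odd y) \<and> dok (y # r))"
| "dok _ = True"

lemma dok_Cons: "dok (x # ys) \<longleftrightarrow> dok ys \<and> (ys \<noteq> [] \<longrightarrow> hd ys < x \<longrightarrow> odd x \<and> odd (hd ys))"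
  by (cases ys) auto

lemma dok_append: "dok (xs @ ys) \<longleftrightarrow> dok xs \<and> dok ys \<and>
   (xs \<noteq> [] \<longrightarrow> ys \<noteq> [] \<longrightarrow> hd ys < last xs \<longrightarrow> odd (last xs) \<and> odd (hd ys))"
proof (induction xs)
  case Nil then show ?case by simp
next
  case (Cons x xs)
  show ?case
  proof (cases xs)
    case Nil then show ?thesis by (simp add: dok_Cons)
  next
    case (Cons y zs)
    then show ?thesis using Cons.IH by (simp add: dok_Cons) blast
  qed
qed

definition goodl :: "nat list \<Rightarrow> bool" where
  "goodl L \<longleftrightarrow> L \<noteq> [] \<and> odd (hd L) \<and> dok L \<and> distinct L"

definition CF :: "nat \<Rightarrow> nat list set set" where
  "CF j = {S. (\<forall>L\<in>S. goodl L) \<and> (\<forall>L1\<in>S. \<forall>L2\<in>S. L1 \<noteq> L2 \<longrightarrow> set L1 \<inter> set L2 = {})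
            \<and> (\<Union>L\<in>S. set L) = {1..j}}"

definition Conf :: "nat \<Rightarrow> nat \<Rightarrow> nat list set set" where
  "Conf j h = {S \<in> CF j. card S = h}"

lemma CF_sub: "S \<in> CF j \<Longrightarrow> S \<subseteq> {xs. set xs \<subseteq> {1..j} \<and> distinct xs}"
  unfolding CF_def goodl_def by blast

lemma CF_finite: "finite (CF j)"
proof -
  have "CF j \<subseteq> Pow {xs. set xs \<subseteq> {1..j} \<and> distinct xs}" using CF_sub by blast
  then show ?thesis using finite_subset_distinct[of "{1..j}"] by (simp add: finite_subset)
qed

lemma CF_fin: "S \<in> CF j \<Longrightarrow> finite S"
  using CF_sub finite_subset_distinct[of "{1..j}"] by (meson finite_atLeastAtMost finite_subset)

lemma Conf_finite: "finite (Conf j h)"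
  unfolding Conf_def using CF_finite by simp

lemma CF_goodl: "S \<in> CF j \<Longrightarrow> L \<in> S \<Longrightarrow> goodl L"
  unfolding CF_def by blast

lemma CF_disj: "S \<in> CF j \<Longrightarrow> L1 \<in> S \<Longrightarrow> L2 \<in> S \<Longrightarrow> x \<in> set L1 \<Longrightarrow> x \<in> set L2 \<Longrightarrow> L1 = L2"
  unfolding CF_def by blast

lemma CF_set: "S \<in> CF j \<Longrightarrow> L \<in> S \<Longrightarrow> x \<in> set L \<Longrightarrow> 1 \<le> x \<and> x \<le> j"
  unfolding CF_def by auto

lemma CF_ex: "S \<in> CF j \<Longrightarrow> 1 \<le> x \<Longrightarrow> x \<le> j \<Longrightarrow> \<exists>L\<in>S. x \<in> set L"
  unfolding CF_def by auto

lemma CF_I: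
  assumes "\<And>L. L \<in> S \<Longrightarrow> goodl L"
    and "\<And>L1 L2 x. L1 \<in> S \<Longrightarrow> L2 \<in> S \<Longrightarrow> x \<in> set L1 \<Longrightarrow> x \<in> set L2 \<Longrightarrow> L1 = L2"
    and "\<And>L x. L \<in> S \<Longrightarrow> x \<in> set L \<Longrightarrow> 1 \<le> x \<and> x \<le> j"
    and "\<And>x. 1 \<le> x \<Longrightarrow> x \<le> j \<Longrightarrow> \<exists>L\<in>S. x \<in> set L"
  shows "S \<in> CF j"
  unfolding CF_def using assms by fastforce

definition ins1 :: "nat \<Rightarrow> nat list set \<Rightarrow> nat list set" where
  "ins1 m S = insert [m] S"
definition ins2 :: "nat \<Rightarrow> nat list set \<times> nat list \<Rightarrow> nat list set" where
  "ins2 m x = insert (snd x @ [m]) (fst x - {snd x})"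
definition ins3 :: "nat \<Rightarrow> nat list set \<times> nat list \<Rightarrow> nat list set" where
  "ins3 m x = insert (m # snd x) (fst x - {snd x})"
definition ins4 :: "nat \<Rightarrow> nat list set \<times> (nat list \<times> nat list) \<Rightarrow> nat list set" where
  "ins4 m x = insert (fst (snd x) @ m # snd (snd x)) (fst x - {fst (snd x), snd (snd x)})"

lemma ins1_CF:
  assumes S: "S \<in> CF j" and o: "odd (Suc j)"
  shows "ins1 (Suc j) S \<in> CF (Suc j)" "card (ins1 (Suc j) S) = Suc (card S)"
proof -
  show "ins1 (Suc j) S \<in> CF (Suc j)" unfolding ins1_def
  proof (rule CF_I)
    fix L assume "L \<in> insert [Suc j] S" then show "goodl L"
      using CF_goodl[OF S] o by (auto simp: goodl_def)
  next
    fix L1 L2 x assume "L1 \<in> insert [Suc j] S" "L2 \<in> insert [Suc j] S" "x \<in> set L1" "x \<in> set L2"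
    then show "L1 = L2" using CF_disj[OF S] CF_set[OF S] by (metis Suc_n_not_le_n empty_iff empty_set insert_iff list.simps(15))
  next
    fix L x assume "L \<in> insert [Suc j] S" "x \<in> set L" then show "1 \<le> x \<and> x \<le> Suc j"
      using CF_set[OF S] by fastforce
  next
    fix x assume "1 \<le> x" "x \<le> Suc j" then show "\<exists>L\<in>insert [Suc j] S. x \<in> set L"
      using CF_ex[OF S, of x] by (cases "x = Suc j") auto
  qed
  have "[Suc j] \<notin> S" using CF_set[OF S, of "[Suc j]" "Suc j"] by auto
  then show "card (ins1 (Suc j) S) = Suc (card S)" unfolding ins1_def using CF_fin[OF S] by simp
qed

lemma ins2_CF:
  assumes S: "S \<in> CF j" and L: "L \<in> S"
  shows "ins2 (Suc j) (S, L) \<in> CF (Suc j)" "card (ins2 (Suc j) (S, L)) = card S"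
proof -
  have gL: "goodl L" using CF_goodl[OF S L] .
  have mL: "Suc j \<notin> set L" using CF_set[OF S L] by fastforce
  have lastL: "last L < Suc j" using gL CF_set[OF S L, of "last L"] by (simp add: goodl_def)
  show "ins2 (Suc j) (S, L) \<in> CF (Suc j)" unfolding ins2_def fst_conv snd_conv
  proof (rule CF_I)
    fix L' assume "L' \<in> insert (L @ [Suc j]) (S - {L})" then show "goodl L'"
    proof
      assume "L' = L @ [Suc j]" then show ?thesis using gL mL lastL
        by (auto simp: goodl_def dok_append)
    qed (use CF_goodl[OF S] in auto)
  next
    fix L1 L2 x assume a: "L1 \<in> insert (L @ [Suc j]) (S - {L})" "L2 \<in> insert (L @ [Suc j]) (S - {L})" "x \<in> set L1" "x \<in> set L2"
    have "x \<in> set L' \<Longrightarrow> L' \<in> S - {L} \<Longrightarrow> x \<noteq> Suc j \<and> x \<notin> set L" for L'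
      using CF_set[OF S, of L' x] CF_disj[OF S L, of L' x] by auto
    then show "L1 = L2" using a CF_disj[OF S] by auto
  next
    fix L' x assume "L' \<in> insert (L @ [Suc j]) (S - {L})" "x \<in> set L'" then show "1 \<le> x \<and> x \<le> Suc j"
      using CF_set[OF S] CF_set[OF S L] by fastforce
  next
    fix x assume "1 \<le> x" "x \<le> Suc j" then show "\<exists>L'\<in>insert (L @ [Suc j]) (S - {L}). x \<in> set L'"
      using CF_ex[OF S, of x] by (cases "x = Suc j") auto
  qed
  have "L @ [Suc j] \<notin> S - {L}" using CF_set[OF S, of "L @ [Suc j]" "Suc j"] by auto
  then show "card (ins2 (Suc j) (S, L)) = card S" unfolding ins2_def using CF_fin[OF S] L
    by (simp add: card_gt_0_iff) (metis Suc_pred card_gt_0_iff empty_iff)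
qed

lemma ins3_CF:
  assumes S: "S \<in> CF j" and L: "L \<in> S" and o: "odd (Suc j)"
  shows "ins3 (Suc j) (S, L) \<in> CF (Suc j)" "card (ins3 (Suc j) (S, L)) = card S"
proof -
  have gL: "goodl L" using CF_goodl[OF S L] .
  have mL: "Suc j \<notin> set L" using CF_set[OF S L] by fastforce
  show "ins3 (Suc j) (S, L) \<in> CF (Suc j)" unfolding ins3_def fst_conv snd_conv
  proof (rule CF_I)
    fix L' assume "L' \<in> insert (Suc j # L) (S - {L})" then show "goodl L'"
    proof
      assume "L' = Suc j # L" then show ?thesis using gL mL o
        by (auto simp: goodl_def dok_Cons)
    qed (use CF_goodl[OF S] in auto)
  next
    fix L1 L2 x assume a: "L1 \<in> insert (Suc j # L) (S - {L})" "L2 \<in> insert (Suc j # L) (S - {L})" "x \<in> set L1" "x \<in> set L2"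
    have "x \<in> set L' \<Longrightarrow> L' \<in> S - {L} \<Longrightarrow> x \<noteq> Suc j \<and> x \<notin> set L" for L'
      using CF_set[OF S, of L' x] CF_disj[OF S L, of L' x] by auto
    then show "L1 = L2" using a CF_disj[OF S] by auto
  next
    fix L' x assume "L' \<in> insert (Suc j # L) (S - {L})" "x \<in> set L'" then show "1 \<le> x \<and> x \<le> Suc j"
      using CF_set[OF S] CF_set[OF S L] by fastforce
  next
    fix x assume "1 \<le> x" "x \<le> Suc j" then show "\<exists>L'\<in>insert (Suc j # L) (S - {L}). x \<in> set L'"
      using CF_ex[OF S, of x] by (cases "x = Suc j") auto
  qed
  have "Suc j # L \<notin> S - {L}" using CF_set[OF S, of "Suc j # L" "Suc j"] by auto
  then show "card (ins3 (Suc j) (S, L)) = card S" unfolding ins3_def using CF_fin[OF S] L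
    by (simp add: card_gt_0_iff) (metis Suc_pred card_gt_0_iff empty_iff)
qed

lemma ins4_CF:
  assumes S: "S \<in> CF j" and L1: "L1 \<in> S" and L2: "L2 \<in> S" and ne: "L1 \<noteq> L2" and o: "odd (Suc j)"
  shows "ins4 (Suc j) (S, (L1, L2)) \<in> CF (Suc j)" "Suc (card (ins4 (Suc j) (S, (L1, L2)))) = card S"
proof -
  have g1: "goodl L1" using CF_goodl[OF S L1] .
  have g2: "goodl L2" using CF_goodl[OF S L2] .
  have m1: "Suc j \<notin> set L1" using CF_set[OF S L1] by fastforce
  have m2: "Suc j \<notin> set L2" using CF_set[OF S L2] by fastforce
  have last1: "last L1 < Suc j" using g1 CF_set[OF S L1, of "last L1"] by (simp add: goodl_def)
  have d12: "set L1 \<inter> set L2 = {}" using CF_disj[OF S L1 L2] ne by blast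
  define A where "A = L1 @ Suc j # L2"
  show "ins4 (Suc j) (S, (L1, L2)) \<in> CF (Suc j)" unfolding ins4_def fst_conv snd_conv A_def[symmetric]
  proof (rule CF_I)
    fix L' assume "L' \<in> insert A (S - {L1, L2})" then show "goodl L'"
    proof
      assume "L' = A" then show ?thesis using g1 g2 m1 m2 o last1 d12 unfolding A_def
        by (auto simp: goodl_def dok_append dok_Cons)
    qed (use CF_goodl[OF S] in auto)
  next
    fix L1' L2' x assume a: "L1' \<in> insert A (S - {L1, L2})" "L2' \<in> insert A (S - {L1, L2})" "x \<in> set L1'" "x \<in> set L2'"
    have "x \<in> set L' \<Longrightarrow> L' \<in> S - {L1, L2} \<Longrightarrow> x \<noteq> Suc j \<and> x \<notin> set L1 \<and> x \<notin> set L2" for L'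
      using CF_set[OF S, of L' x] CF_disj[OF S L1, of L' x] CF_disj[OF S L2, of L' x] by auto
    then show "L1' = L2'" using a CF_disj[OF S] unfolding A_def by auto
  next
    fix L' x assume "L' \<in> insert A (S - {L1, L2})" "x \<in> set L'" then show "1 \<le> x \<and> x \<le> Suc j"
      using CF_set[OF S] CF_set[OF S L1] CF_set[OF S L2] unfolding A_def by fastforce
  next
    fix x assume "1 \<le> x" "x \<le> Suc j" then show "\<exists>L'\<in>insert A (S - {L1, L2}). x \<in> set L'"
      using CF_ex[OF S, of x] unfolding A_def by (cases "x = Suc j") auto
  qed
  have "A \<notin> S - {L1, L2}" using CF_set[OF S, of A "Suc j"] unfolding A_def by auto
  moreover have "card (S - {L1, L2}) = card S - 2" using CF_fin[OF S] L1 L2 ne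
    by (simp add: card_Diff_subset)
  moreover have "card S \<ge> 2"
  proof -
    have "{L1, L2} \<subseteq> S" using L1 L2 by simp
    then have "card {L1, L2} \<le> card S" using CF_fin[OF S] card_mono by blast
    then show ?thesis using ne by simp
  qed
  ultimately show "Suc (card (ins4 (Suc j) (S, (L1, L2)))) = card S" unfolding ins4_def A_def using CF_fin[OF S]
    by simp
qed

lemma split_CF:
  assumes S: "S \<in> CF (Suc j)" and A: "A \<in> S" and mA: "Suc j \<in> set A"
    and gP: "\<And>L. L \<in> P \<Longrightarrow> goodl L"
    and dP: "\<And>L1 L2 x. L1 \<in> P \<Longrightarrow> L2 \<in> P \<Longrightarrow> x \<in> set L1 \<Longrightarrow> x \<in> set L2 \<Longrightarrow> L1 = L2"
    and uP: "(\<Union>L\<in>P. set L) = set A - {Suc j}" and fP: "finite P"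
  shows "(S - {A}) \<union> P \<in> CF j" "card ((S - {A}) \<union> P) = card S - 1 + card P"
proof -
  have PA: "L \<in> P \<Longrightarrow> x \<in> set L \<Longrightarrow> x \<in> set A \<and> x \<noteq> Suc j" for L x using uP by blast
  show "(S - {A}) \<union> P \<in> CF j"
  proof (rule CF_I)
    fix L assume "L \<in> (S - {A}) \<union> P" then show "goodl L" using gP CF_goodl[OF S] by blast
  next
    fix L1 L2 x assume a: "L1 \<in> (S - {A}) \<union> P" "L2 \<in> (S - {A}) \<union> P" "x \<in> set L1" "x \<in> set L2"
    show "L1 = L2"
    proof (cases "L1 \<in> P")
      case True
      show ?thesis
      proof (cases "L2 \<in> P")
        case True
        then show ?thesis using dP \<open>L1 \<in> P\<close> a by blast
      next
        case False
        then have "L2 \<in> S" "L2 \<noteq> A" using a by auto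
        moreover have "x \<in> set A" using PA[OF True a(3)] by blast
        ultimately show ?thesis using CF_disj[OF S _ A] a(4) by blast
      qed
    next
      case False
      then have L1: "L1 \<in> S" "L1 \<noteq> A" using a by auto
      show ?thesis
      proof (cases "L2 \<in> P")
        case True
        have "x \<in> set A" using PA[OF True a(4)] by blast
        then show ?thesis using CF_disj[OF S L1(1) A] a(3) L1(2) by blast
      next
        case False
        then have "L2 \<in> S" using a by auto
        then show ?thesis using CF_disj[OF S L1(1)] a by blast
      qed
    qed
  next
    fix L x assume a: "L \<in> (S - {A}) \<union> P" "x \<in> set L"
    show "1 \<le> x \<and> x \<le> j"
    proof (cases "L \<in> P")
      case True
      then show ?thesis using PA[OF True a(2)] CF_set[OF S A] by fastforce
    next
      case False
      then have "L \<in> S" "L \<noteq> A" using a by auto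
      moreover have "x \<noteq> Suc j" using CF_disj[OF S _ A _ mA] a(2) calculation by blast
      ultimately show ?thesis using CF_set[OF S _ a(2)] by fastforce
    qed
  next
    fix x assume x: "1 \<le> x" "x \<le> j"
    then obtain L where L: "L \<in> S" "x \<in> set L" using CF_ex[OF S, of x] by auto
    show "\<exists>L\<in>(S - {A}) \<union> P. x \<in> set L"
    proof (cases "L = A")
      case True
      then have "x \<in> (\<Union>L\<in>P. set L)" using uP L x by auto
      then show ?thesis by blast
    next
      case False then show ?thesis using L by blast
    qed
  qed
  have disj: "(S - {A}) \<inter> P = {}"
  proof (rule ccontr)
    assume "(S - {A}) \<inter> P \<noteq> {}"
    then obtain L where L: "L \<in> S" "L \<noteq> A" "L \<in> P" by blast
    then have "L \<noteq> []" using gP by (auto simp: goodl_def)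
    then obtain x where "x \<in> set L" by (cases L) auto
    then show False using PA[OF L(3)] CF_disj[OF S L(1) A] L(2) by blast
  qed
  have fS: "finite S" using CF_fin[OF S] .
  then have "card ((S - {A}) \<union> P) = card (S - {A}) + card P" using disj fP by (simp add: card_Un_disjoint)
  then show "card ((S - {A}) \<union> P) = card S - 1 + card P" using A fS by simp
qed

definition D1 :: "nat \<Rightarrow> nat \<Rightarrow> nat list set set" where
  "D1 j h = (if odd (Suc j) \<and> h \<ge> 1 then Conf j (h - 1) else {})"
definition D2 :: "nat \<Rightarrow> nat \<Rightarrow> (nat list set \<times> nat list) set" where
  "D2 j h = (SIGMA S:Conf j h. S)"
definition D3 :: "nat \<Rightarrow> nat \<Rightarrow> (nat list set \<times> nat list) set" where
  "D3 j h = (if odd (Suc j) then (SIGMA S:Conf j h. S) else {})"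
definition D4 :: "nat \<Rightarrow> nat \<Rightarrow> (nat list set \<times> (nat list \<times> nat list)) set" where
  "D4 j h = (if odd (Suc j) then (SIGMA S:Conf j (Suc h). {(a, b). a \<in> S \<and> b \<in> S \<and> a \<noteq> b}) else {})"

lemma cover:
  assumes S: "S \<in> Conf (Suc j) h"
  shows "S \<in> ins1 (Suc j) ` D1 j h \<union> ins2 (Suc j) ` D2 j h \<union> ins3 (Suc j) ` D3 j h \<union> ins4 (Suc j) ` D4 j h"
proof -
  let ?m = "Suc j"
  have SC: "S \<in> CF (Suc j)" and cS: "card S = h" using S by (auto simp: Conf_def)
  obtain A where A: "A \<in> S" "?m \<in> set A" using CF_ex[OF SC, of ?m] by auto
  obtain a b where ab: "A = a @ ?m # b" using split_list[OF A(2)] by blast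
  have gA: "goodl A" using CF_goodl[OF SC A(1)] .
  have dA: "distinct A" using gA by (simp add: goodl_def)
  have ma: "?m \<notin> set a" and mb: "?m \<notin> set b" and dab: "set a \<inter> set b = {}"
    and da: "distinct a" and db: "distinct b" using dA ab by auto
  have dokA: "dok A" using gA by (simp add: goodl_def)
  have rngA: "\<And>x. x \<in> set A \<Longrightarrow> x \<le> ?m" using CF_set[OF SC A(1)] by blast
  have fS: "finite S" using CF_fin[OF SC] .
  have Sins: "S = insert A (S - {A})" using A(1) by blast
  have cpos: "card S \<ge> 1"
  proof -
    have "S \<noteq> {}" using A(1) by blast
    then show ?thesis using fS by (simp add: Suc_le_eq card_gt_0_iff)
  qed
  have bfacts: "b \<noteq> [] \<Longrightarrow> odd ?m \<and> goodl b"
  proof -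
    assume bne: "b \<noteq> []"
    have hb: "hd b \<in> set A" using bne ab by auto
    have "hd b \<noteq> ?m" using bne mb by (cases b) auto
    then have lt: "hd b < ?m" using rngA[OF hb] by simp
    have "dok (?m # b)" using dokA ab by (simp add: dok_append)
    then have "odd ?m \<and> odd (hd b) \<and> dok b" using lt bne by (simp add: dok_Cons)
    then show ?thesis using bne db by (simp add: goodl_def)
  qed
  have afacts: "a \<noteq> [] \<Longrightarrow> goodl a"
  proof -
    assume ane: "a \<noteq> []"
    have "hd a = hd A" using ane ab by simp
    moreover have "dok a" using dokA ab by (simp add: dok_append)
    ultimately show ?thesis using ane da gA by (simp add: goodl_def)
  qed
  have anotin: "a \<noteq> [] \<Longrightarrow> a \<notin> S - {A}"
  proof
    assume "a \<noteq> []" "a \<in> S - {A}"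
    then obtain x where "x \<in> set a" by (cases a) auto
    then show False using CF_disj[OF SC _ A(1), of a x] \<open>a \<in> S - {A}\<close> ab by auto
  qed
  have bnotin: "b \<noteq> [] \<Longrightarrow> b \<notin> S - {A}"
  proof
    assume "b \<noteq> []" "b \<in> S - {A}"
    then obtain x where "x \<in> set b" by (cases b) auto
    then show False using CF_disj[OF SC _ A(1), of b x] \<open>b \<in> S - {A}\<close> ab by auto
  qed
  consider "a = []" "b = []" | "a \<noteq> []" "b = []" | "a = []" "b \<noteq> []" | "a \<noteq> []" "b \<noteq> []" by blast
  then show ?thesis
  proof cases
    case 1
    have Am: "A = [?m]" using ab 1 by simp
    have om: "odd ?m" using gA Am by (simp add: goodl_def)
    have sp: "(S - {A}) \<union> {} \<in> CF j" "card ((S - {A}) \<union> {}) = card S - 1 + card ({} :: nat list set)"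
      using split_CF[OF SC A, of "{}"] Am by auto
    have h1: "h \<ge> 1" using cS cpos by simp
    have "S - {A} \<in> D1 j h" using sp om h1 cS by (simp add: D1_def Conf_def)
    moreover have "S = ins1 ?m (S - {A})" unfolding ins1_def using Sins Am by simp
    ultimately show ?thesis by blast
  next
    case 2
    have sp: "(S - {A}) \<union> {a} \<in> CF j" "card ((S - {A}) \<union> {a}) = card S - 1 + card {a}"
      using split_CF[OF SC A, of "{a}"] afacts 2 ab ma by auto
    have h1: "card S \<ge> 1" using cpos .
    have "((S - {A}) \<union> {a}, a) \<in> D2 j h" using sp cS h1 by (simp add: D2_def Conf_def)
    moreover have "S = ins2 ?m ((S - {A}) \<union> {a}, a)" unfolding ins2_def using Sins anotin 2 ab
      by auto
    ultimately show ?thesis by blast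
  next
    case 3
    have bf: "odd ?m" "goodl b" using bfacts 3 by auto
    have sp: "(S - {A}) \<union> {b} \<in> CF j" "card ((S - {A}) \<union> {b}) = card S - 1 + card {b}"
      using split_CF[OF SC A, of "{b}"] bf 3 ab mb by auto
    have h1: "card S \<ge> 1" using cpos .
    have "((S - {A}) \<union> {b}, b) \<in> D3 j h" using sp cS h1 bf by (simp add: D3_def Conf_def)
    moreover have "S = ins3 ?m ((S - {A}) \<union> {b}, b)" unfolding ins3_def using Sins bnotin 3 ab
      by auto
    ultimately show ?thesis by blast
  next
    case 4
    have bf: "odd ?m" "goodl b" using bfacts 4 by auto
    have ga: "goodl a" using afacts 4 by auto
    have ha: "hd a \<in> set a" using 4 by simp
    have anb: "a \<noteq> b" using dab ha by blast
    have dP: "L1 \<in> {a, b} \<Longrightarrow> L2 \<in> {a, b} \<Longrightarrow> x \<in> set L1 \<Longrightarrow> x \<in> set L2 \<Longrightarrow> L1 = L2" for L1 L2 x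
      using dab by blast
    have gP: "L \<in> {a, b} \<Longrightarrow> goodl L" for L using ga bf by blast
    have uP: "(\<Union>L\<in>{a, b}. set L) = set A - {?m}" using ab ma mb by auto
    have sp: "(S - {A}) \<union> {a, b} \<in> CF j" "card ((S - {A}) \<union> {a, b}) = card S - 1 + card {a, b}"
      using split_CF[OF SC A(1) A(2) gP dP uP] by auto
    have h1: "card S \<ge> 1" using cpos .
    have "((S - {A}) \<union> {a, b}, (a, b)) \<in> D4 j h" using sp cS h1 bf anb by (simp add: D4_def Conf_def)
    moreover have "S = ins4 ?m ((S - {A}) \<union> {a, b}, (a, b))" unfolding ins4_def using Sins anotin bnotin 4 ab
      by auto
    ultimately show ?thesis by blast
  qed
qed

lemma CF_notm: "S \<in> CF j \<Longrightarrow> L \<in> S \<Longrightarrow> Suc j \<notin> set L"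
  using CF_set by fastforce

lemma img_sub:
  shows "ins1 (Suc j) ` D1 j h \<subseteq> Conf (Suc j) h"
    and "ins2 (Suc j) ` D2 j h \<subseteq> Conf (Suc j) h"
    and "ins3 (Suc j) ` D3 j h \<subseteq> Conf (Suc j) h"
    and "ins4 (Suc j) ` D4 j h \<subseteq> Conf (Suc j) h"
proof -
  show "ins1 (Suc j) ` D1 j h \<subseteq> Conf (Suc j) h"
  proof
    fix T assume "T \<in> ins1 (Suc j) ` D1 j h"
    then obtain S where S: "S \<in> Conf j (h - 1)" "odd (Suc j)" "h \<ge> 1" "T = ins1 (Suc j) S"
      by (auto simp: D1_def split: if_splits)
    then show "T \<in> Conf (Suc j) h" using ins1_CF[of S j] by (auto simp: Conf_def)
  qed
  show "ins2 (Suc j) ` D2 j h \<subseteq> Conf (Suc j) h"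
  proof
    fix T assume "T \<in> ins2 (Suc j) ` D2 j h"
    then obtain S L where S: "S \<in> Conf j h" "L \<in> S" "T = ins2 (Suc j) (S, L)"
      by (auto simp: D2_def)
    then show "T \<in> Conf (Suc j) h" using ins2_CF[of S j L] by (auto simp: Conf_def)
  qed
  show "ins3 (Suc j) ` D3 j h \<subseteq> Conf (Suc j) h"
  proof
    fix T assume "T \<in> ins3 (Suc j) ` D3 j h"
    then obtain S L where S: "S \<in> Conf j h" "L \<in> S" "T = ins3 (Suc j) (S, L)" "odd (Suc j)"
      by (auto simp: D3_def split: if_splits)
    then show "T \<in> Conf (Suc j) h" using ins3_CF[of S j L] by (auto simp: Conf_def)
  qed
  show "ins4 (Suc j) ` D4 j h \<subseteq> Conf (Suc j) h"
  proof
    fix T assume "T \<in> ins4 (Suc j) ` D4 j h"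
    then obtain S L1 L2 where S: "S \<in> Conf j (Suc h)" "L1 \<in> S" "L2 \<in> S" "L1 \<noteq> L2"
        "T = ins4 (Suc j) (S, (L1, L2))" "odd (Suc j)"
      by (auto simp: D4_def split: if_splits)
    then show "T \<in> Conf (Suc j) h" using ins4_CF[of S j L1 L2] by (auto simp: Conf_def)
  qed
qed

lemma inj1: "inj_on (ins1 (Suc j)) (D1 j h)"
proof (rule inj_onI)
  fix S S' assume a: "S \<in> D1 j h" "S' \<in> D1 j h" "ins1 (Suc j) S = ins1 (Suc j) S'"
  have "S \<in> Conf j (h - 1)" "S' \<in> Conf j (h - 1)" using a(1,2) unfolding D1_def by (simp_all split: if_splits)
  then have S: "S \<in> CF j" "S' \<in> CF j" unfolding Conf_def by simp_all
  have n: "[Suc j] \<notin> S" "[Suc j] \<notin> S'" using CF_notm[OF S(1), of "[Suc j]"] CF_notm[OF S(2), of "[Suc j]"] by auto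
  have "insert [Suc j] S = insert [Suc j] S'" using a(3) unfolding ins1_def .
  then show "S = S'" using insert_ident[OF n] by blast
qed

lemma inj2: "inj_on (ins2 (Suc j)) (D2 j h)"
proof (rule inj_onI)
  fix x y assume a: "x \<in> D2 j h" "y \<in> D2 j h" "ins2 (Suc j) x = ins2 (Suc j) y"
  obtain S L S' L' where xy: "x = (S, L)" "y = (S', L')" by (cases x, cases y)
  have "S \<in> Conf j h" "L \<in> S" "S' \<in> Conf j h" "L' \<in> S'" using a(1,2) unfolding xy D2_def by simp_all
  then have S: "S \<in> CF j" "L \<in> S" "S' \<in> CF j" "L' \<in> S'" unfolding Conf_def by simp_all
  have e: "insert (L @ [Suc j]) (S - {L}) = insert (L' @ [Suc j]) (S' - {L'})"
    using a(3) unfolding xy ins2_def by simp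
  have T: "insert (L @ [Suc j]) (S - {L}) \<in> CF (Suc j)" using ins2_CF(1)[OF S(1,2)] unfolding ins2_def by simp
  have m2: "L' @ [Suc j] \<in> insert (L @ [Suc j]) (S - {L})" unfolding e by simp
  have "L @ [Suc j] = L' @ [Suc j]" using CF_disj[OF T insertI1 m2, of "Suc j"] by simp
  then have LL: "L = L'" by simp
  have n: "L @ [Suc j] \<notin> S - {L}" "L @ [Suc j] \<notin> S' - {L}"
    using CF_notm[OF S(1), of "L @ [Suc j]"] CF_notm[OF S(3), of "L @ [Suc j]"] by auto
  have "insert (L @ [Suc j]) (S - {L}) = insert (L @ [Suc j]) (S' - {L})" using e LL by simp
  then have "S - {L} = S' - {L}" using insert_ident[OF n] by blast
  then show "x = y" using xy LL S by blast
qed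

lemma inj3: "inj_on (ins3 (Suc j)) (D3 j h)"
proof (rule inj_onI)
  fix x y assume a: "x \<in> D3 j h" "y \<in> D3 j h" "ins3 (Suc j) x = ins3 (Suc j) y"
  obtain S L S' L' where xy: "x = (S, L)" "y = (S', L')" by (cases x, cases y)
  have o: "odd (Suc j)" using a(1) unfolding D3_def by (simp split: if_splits)
  then have "S \<in> Conf j h" "L \<in> S" "S' \<in> Conf j h" "L' \<in> S'" using a(1,2) unfolding xy D3_def by simp_all
  then have S: "S \<in> CF j" "L \<in> S" "S' \<in> CF j" "L' \<in> S'" unfolding Conf_def by simp_all
  have e: "insert (Suc j # L) (S - {L}) = insert (Suc j # L') (S' - {L'})"
    using a(3) unfolding xy ins3_def by simp
  have T: "insert (Suc j # L) (S - {L}) \<in> CF (Suc j)" using ins3_CF(1)[OF S(1,2) o] unfolding ins3_def by simp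
  have m2: "Suc j # L' \<in> insert (Suc j # L) (S - {L})" unfolding e by simp
  have "Suc j # L = Suc j # L'" using CF_disj[OF T insertI1 m2, of "Suc j"] by simp
  then have LL: "L = L'" by simp
  have n: "Suc j # L \<notin> S - {L}" "Suc j # L \<notin> S' - {L}"
    using CF_notm[OF S(1), of "Suc j # L"] CF_notm[OF S(3), of "Suc j # L"] by auto
  have "insert (Suc j # L) (S - {L}) = insert (Suc j # L) (S' - {L})" using e LL by simp
  then have "S - {L} = S' - {L}" using insert_ident[OF n] by blast
  then show "x = y" using xy LL S by blast
qed

lemma inj4: "inj_on (ins4 (Suc j)) (D4 j h)"
proof (rule inj_onI)
  fix x y assume a: "x \<in> D4 j h" "y \<in> D4 j h" "ins4 (Suc j) x = ins4 (Suc j) y"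
  obtain S p S' p' where xy0: "x = (S, p)" "y = (S', p')" by (cases x, cases y)
  obtain L1 L2 L1' L2' where pp: "p = (L1, L2)" "p' = (L1', L2')" by (cases p, cases p')
  have xy: "x = (S, (L1, L2))" "y = (S', (L1', L2'))" using xy0 pp by simp_all
  have o: "odd (Suc j)" using a(1) unfolding D4_def by (simp split: if_splits)
  then have "S \<in> Conf j (Suc h)" "L1 \<in> S" "L2 \<in> S" "L1 \<noteq> L2" "S' \<in> Conf j (Suc h)" "L1' \<in> S'" "L2' \<in> S'"
    using a(1,2) unfolding xy D4_def by simp_all
  then have S: "S \<in> CF j" "L1 \<in> S" "L2 \<in> S" "L1 \<noteq> L2" "S' \<in> CF j" "L1' \<in> S'" "L2' \<in> S'"
    unfolding Conf_def by simp_all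
  have e: "insert (L1 @ Suc j # L2) (S - {L1, L2}) = insert (L1' @ Suc j # L2') (S' - {L1', L2'})"
    using a(3) unfolding xy ins4_def by simp
  have T: "insert (L1 @ Suc j # L2) (S - {L1, L2}) \<in> CF (Suc j)" using ins4_CF(1)[OF S(1-4) o] unfolding ins4_def by simp
  have m2: "L1' @ Suc j # L2' \<in> insert (L1 @ Suc j # L2) (S - {L1, L2})" unfolding e by simp
  have "L1 @ Suc j # L2 = L1' @ Suc j # L2'" using CF_disj[OF T insertI1 m2, of "Suc j"] by simp
  moreover have "Suc j \<notin> set L1" "Suc j \<notin> set L2" using CF_notm[OF S(1,2)] CF_notm[OF S(1,3)] by simp_all
  ultimately have LL: "L1 = L1'" "L2 = L2'" using append_Cons_eq_iff[of "Suc j" L1 L2 L1' L2'] by simp_all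
  have n: "L1 @ Suc j # L2 \<notin> S - {L1, L2}" "L1 @ Suc j # L2 \<notin> S' - {L1, L2}"
    using CF_notm[OF S(1), of "L1 @ Suc j # L2"] CF_notm[OF S(5), of "L1 @ Suc j # L2"] by auto
  have "insert (L1 @ Suc j # L2) (S - {L1, L2}) = insert (L1 @ Suc j # L2) (S' - {L1, L2})" using e LL by simp
  then have "S - {L1, L2} = S' - {L1, L2}" using insert_ident[OF n] by blast
  then show "x = y" using xy LL S by blast
qed

lemma img_forms:
  shows "T \<in> ins1 (Suc j) ` D1 j h \<Longrightarrow> T \<in> CF (Suc j) \<and> [Suc j] \<in> T"
    and "T \<in> ins2 (Suc j) ` D2 j h \<Longrightarrow> T \<in> CF (Suc j) \<and> (\<exists>L. L \<noteq> [] \<and> Suc j \<notin> set L \<and> L @ [Suc j] \<in> T)"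
    and "T \<in> ins3 (Suc j) ` D3 j h \<Longrightarrow> T \<in> CF (Suc j) \<and> (\<exists>L. L \<noteq> [] \<and> Suc j # L \<in> T)"
    and "T \<in> ins4 (Suc j) ` D4 j h \<Longrightarrow> T \<in> CF (Suc j) \<and> (\<exists>L1 L2. L1 \<noteq> [] \<and> L2 \<noteq> [] \<and> Suc j \<notin> set L1 \<and> L1 @ Suc j # L2 \<in> T)"
proof -
  assume "T \<in> ins1 (Suc j) ` D1 j h"
  then show "T \<in> CF (Suc j) \<and> [Suc j] \<in> T" using img_sub(1)[of j h] by (auto simp: ins1_def Conf_def)
next
  assume a: "T \<in> ins2 (Suc j) ` D2 j h"
  then obtain S L where S: "S \<in> Conf j h" "L \<in> S" "T = ins2 (Suc j) (S, L)"
    by (auto simp: D2_def)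
  have "L \<noteq> []" "Suc j \<notin> set L" using S CF_goodl CF_notm by (auto simp: Conf_def goodl_def)
  then show "T \<in> CF (Suc j) \<and> (\<exists>L. L \<noteq> [] \<and> Suc j \<notin> set L \<and> L @ [Suc j] \<in> T)"
    using img_sub(2)[of j h] a S by (auto simp: ins2_def Conf_def)
next
  assume a: "T \<in> ins3 (Suc j) ` D3 j h"
  then obtain S L where S: "S \<in> Conf j h" "L \<in> S" "T = ins3 (Suc j) (S, L)"
    by (auto simp: D3_def split: if_splits)
  have "L \<noteq> []" using S CF_goodl by (auto simp: Conf_def goodl_def)
  then show "T \<in> CF (Suc j) \<and> (\<exists>L. L \<noteq> [] \<and> Suc j # L \<in> T)"
    using img_sub(3)[of j h] a S by (auto simp: ins3_def Conf_def)
next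
  assume a: "T \<in> ins4 (Suc j) ` D4 j h"
  then obtain S L1 L2 where S: "S \<in> Conf j (Suc h)" "L1 \<in> S" "L2 \<in> S" "T = ins4 (Suc j) (S, (L1, L2))"
    by (auto simp: D4_def split: if_splits)
  have "L1 \<noteq> []" "L2 \<noteq> []" "Suc j \<notin> set L1" using S CF_goodl CF_notm by (auto simp: Conf_def goodl_def)
  then show "T \<in> CF (Suc j) \<and> (\<exists>L1 L2. L1 \<noteq> [] \<and> L2 \<noteq> [] \<and> Suc j \<notin> set L1 \<and> L1 @ Suc j # L2 \<in> T)"
    using img_sub(4)[of j h] a S by (auto simp: ins4_def Conf_def)
qed

lemma m_uniq: "T \<in> CF (Suc j) \<Longrightarrow> X \<in> T \<Longrightarrow> Y \<in> T \<Longrightarrow> Suc j \<in> set X \<Longrightarrow> Suc j \<in> set Y \<Longrightarrow> X = Y"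
  using CF_disj by blast

lemma img_disj:
  shows "ins1 (Suc j) ` D1 j h \<inter> ins2 (Suc j) ` D2 j h = {}"
    and "ins1 (Suc j) ` D1 j h \<inter> ins3 (Suc j) ` D3 j h = {}"
    and "ins1 (Suc j) ` D1 j h \<inter> ins4 (Suc j) ` D4 j h = {}"
    and "ins2 (Suc j) ` D2 j h \<inter> ins3 (Suc j) ` D3 j h = {}"
    and "ins2 (Suc j) ` D2 j h \<inter> ins4 (Suc j) ` D4 j h = {}"
    and "ins3 (Suc j) ` D3 j h \<inter> ins4 (Suc j) ` D4 j h = {}"
proof -
  let ?m = "Suc j"
  have F1: "T \<in> ins1 ?m ` D1 j h \<Longrightarrow> T \<in> CF ?m \<and> [?m] \<in> T" for T using img_forms(1) .
  have F2: "T \<in> ins2 ?m ` D2 j h \<Longrightarrow> \<exists>L. L \<noteq> [] \<and> ?m \<notin> set L \<and> L @ [?m] \<in> T" for T using img_forms(2) by blast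
  have F3: "T \<in> ins3 ?m ` D3 j h \<Longrightarrow> \<exists>L. L \<noteq> [] \<and> ?m # L \<in> T" for T using img_forms(3) by blast
  have F4: "T \<in> ins4 ?m ` D4 j h \<Longrightarrow> \<exists>L1 L2. L1 \<noteq> [] \<and> L2 \<noteq> [] \<and> ?m \<notin> set L1 \<and> L1 @ ?m # L2 \<in> T" for T using img_forms(4) by blast
  show "ins1 (Suc j) ` D1 j h \<inter> ins2 (Suc j) ` D2 j h = {}"
  proof (rule ccontr)
    assume "\<not> ?thesis" then obtain T where T: "T \<in> ins1 ?m ` D1 j h" "T \<in> ins2 ?m ` D2 j h" by blast
    obtain L where L: "L \<noteq> []" "L @ [?m] \<in> T" using F2[OF T(2)] by blast
    have "T \<in> CF ?m" "[?m] \<in> T" using F1[OF T(1)] by simp_all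
    then have "[?m] = L @ [?m]" using m_uniq[of T j "[?m]" "L @ [?m]"] L by simp
    then show False using L(1) by (cases L) auto
  qed
  show "ins1 (Suc j) ` D1 j h \<inter> ins3 (Suc j) ` D3 j h = {}"
  proof (rule ccontr)
    assume "\<not> ?thesis" then obtain T where T: "T \<in> ins1 ?m ` D1 j h" "T \<in> ins3 ?m ` D3 j h" by blast
    obtain L where L: "L \<noteq> []" "?m # L \<in> T" using F3[OF T(2)] by blast
    have "T \<in> CF ?m" "[?m] \<in> T" using F1[OF T(1)] by simp_all
    then have "[?m] = ?m # L" using m_uniq[of T j "[?m]" "?m # L"] L by simp
    then show False using L(1) by simp
  qed
  show "ins1 (Suc j) ` D1 j h \<inter> ins4 (Suc j) ` D4 j h = {}"
  proof (rule ccontr)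
    assume "\<not> ?thesis" then obtain T where T: "T \<in> ins1 ?m ` D1 j h" "T \<in> ins4 ?m ` D4 j h" by blast
    obtain L1 L2 where L: "L1 \<noteq> []" "L1 @ ?m # L2 \<in> T" using F4[OF T(2)] by blast
    have "T \<in> CF ?m" "[?m] \<in> T" using F1[OF T(1)] by simp_all
    then have "[?m] = L1 @ ?m # L2" using m_uniq[of T j "[?m]" "L1 @ ?m # L2"] L by simp
    then show False using L(1) by (cases L1) auto
  qed
  show "ins2 (Suc j) ` D2 j h \<inter> ins3 (Suc j) ` D3 j h = {}"
  proof (rule ccontr)
    assume "\<not> ?thesis" then obtain T where T: "T \<in> ins2 ?m ` D2 j h" "T \<in> ins3 ?m ` D3 j h" by blast
    obtain L where L: "L \<noteq> []" "?m \<notin> set L" "L @ [?m] \<in> T" using F2[OF T(1)] by blast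
    obtain L' where L': "L' \<noteq> []" "?m # L' \<in> T" using F3[OF T(2)] by blast
    have "T \<in> CF ?m" using F1 img_forms(2)[OF T(1)] by simp
    then have "L @ [?m] = ?m # L'" using m_uniq[of T j "L @ [?m]" "?m # L'"] L L' by simp
    then show False using L(1,2) by (cases L) auto
  qed
  show "ins2 (Suc j) ` D2 j h \<inter> ins4 (Suc j) ` D4 j h = {}"
  proof (rule ccontr)
    assume "\<not> ?thesis" then obtain T where T: "T \<in> ins2 ?m ` D2 j h" "T \<in> ins4 ?m ` D4 j h" by blast
    obtain L where L: "L \<noteq> []" "?m \<notin> set L" "L @ [?m] \<in> T" using F2[OF T(1)] by blast
    obtain L1 L2 where L': "L2 \<noteq> []" "L1 @ ?m # L2 \<in> T" using F4[OF T(2)] by blast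
    have "T \<in> CF ?m" using img_forms(2)[OF T(1)] by simp
    then have e: "L @ ?m # [] = L1 @ ?m # L2" using m_uniq[of T j "L @ [?m]" "L1 @ ?m # L2"] L L' by simp
    have "[] = L2" using append_Cons_eq_iff[of ?m L "[]" L1 L2] L(2) e by simp
    then show False using L'(1) by simp
  qed
  show "ins3 (Suc j) ` D3 j h \<inter> ins4 (Suc j) ` D4 j h = {}"
  proof (rule ccontr)
    assume "\<not> ?thesis" then obtain T where T: "T \<in> ins3 ?m ` D3 j h" "T \<in> ins4 ?m ` D4 j h" by blast
    obtain L where L: "?m # L \<in> T" using F3[OF T(1)] by blast
    obtain L1 L2 where L': "L1 \<noteq> []" "?m \<notin> set L1" "L1 @ ?m # L2 \<in> T" using F4[OF T(2)] by blast
    have "T \<in> CF ?m" using img_forms(3)[OF T(1)] by simp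
    then have e: "?m # L = L1 @ ?m # L2" using m_uniq[of T j "?m # L" "L1 @ ?m # L2"] L L' by simp
    then show False using L'(1,2) by (cases L1) auto
  qed
qed

lemma CF0: "CF 0 = {{}}"
proof
  show "CF 0 \<subseteq> {{}}"
  proof
    fix S assume S: "S \<in> CF 0"
    have "S = {}"
    proof (rule ccontr)
      assume "S \<noteq> {}" then obtain L where L: "L \<in> S" by blast
      then have "L \<noteq> []" using CF_goodl[OF S] by (simp add: goodl_def)
      then obtain x where x: "x \<in> set L" by (cases L) auto
      have "1 \<le> x \<and> x \<le> 0" using CF_set[OF S L x] .
      then show False by linarith
    qed
    then show "S \<in> {{}}" by simp
  qed
next
  have "{} \<in> CF 0" by (rule CF_I) auto
  then show "{{}} \<subseteq> CF 0" by simp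
qed

lemma Conf0: "card (Conf 0 h) = FF 0 h"
proof (cases "h = 0")
  case True
  have "Conf 0 h = {{}}" unfolding Conf_def CF0 using True by auto
  then show ?thesis using True by simp
next
  case False
  have "Conf 0 h = {}" unfolding Conf_def CF0 using False by auto
  then show ?thesis using False by simp
qed

lemma card_offdiag: "finite S \<Longrightarrow> card {(a, b). a \<in> S \<and> b \<in> S \<and> a \<noteq> b} = card S * (card S - 1)"
proof -
  assume f: "finite S"
  have "{(a, b). a \<in> S \<and> b \<in> S \<and> a \<noteq> b} = (SIGMA a:S. S - {a})" by auto
  then have "card {(a, b). a \<in> S \<and> b \<in> S \<and> a \<noteq> b} = (\<Sum>a\<in>S. card (S - {a}))" using f by simp
  also have "\<dots> = (\<Sum>a\<in>S. card S - 1)" by (rule sum.cong) (auto simp: f)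
  finally show ?thesis by simp
qed

lemma Conf_Suc_eq: "Conf (Suc j) h = ins1 (Suc j) ` D1 j h \<union> ins2 (Suc j) ` D2 j h \<union> ins3 (Suc j) ` D3 j h \<union> ins4 (Suc j) ` D4 j h"
proof (rule equalityI)
  show "Conf (Suc j) h \<subseteq> ins1 (Suc j) ` D1 j h \<union> ins2 (Suc j) ` D2 j h \<union> ins3 (Suc j) ` D3 j h \<union> ins4 (Suc j) ` D4 j h"
    by (rule subsetI, rule cover)
  show "ins1 (Suc j) ` D1 j h \<union> ins2 (Suc j) ` D2 j h \<union> ins3 (Suc j) ` D3 j h \<union> ins4 (Suc j) ` D4 j h \<subseteq> Conf (Suc j) h"
    by (intro Un_least img_sub)
qed

lemma card_D2: "card (D2 j h) = h * card (Conf j h)"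
proof -
  have "card (D2 j h) = (\<Sum>S\<in>Conf j h. card S)" unfolding D2_def
    by (rule card_SigmaI[OF Conf_finite]) (auto simp: Conf_def intro: CF_fin)
  also have "\<dots> = (\<Sum>S\<in>Conf j h. h)" by (rule sum.cong) (auto simp: Conf_def)
  finally show ?thesis by simp
qed

lemma card_D4: "card (D4 j h) = (if odd (Suc j) then Suc h * h * card (Conf j (Suc h)) else 0)"
proof (cases "odd (Suc j)")
  case True
  have fin: "\<forall>S\<in>Conf j (Suc h). finite {(a, b). a \<in> S \<and> b \<in> S \<and> a \<noteq> b}"
  proof
    fix S assume "S \<in> Conf j (Suc h)"
    then have "finite S" using CF_fin by (auto simp: Conf_def)
    then have "finite (S \<times> S)" by simp
    then show "finite {(a, b). a \<in> S \<and> b \<in> S \<and> a \<noteq> b}" by (rule finite_subset[rotated]) auto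
  qed
  have "card (D4 j h) = (\<Sum>S\<in>Conf j (Suc h). card {(a, b). a \<in> S \<and> b \<in> S \<and> a \<noteq> b})"
    unfolding D4_def using True Conf_finite fin by simp
  also have "\<dots> = (\<Sum>S\<in>Conf j (Suc h). Suc h * h)"
    by (rule sum.cong) (auto simp: Conf_def card_offdiag CF_fin)
  finally show ?thesis using True by simp
qed (simp add: D4_def)

theorem card_Conf: "card (Conf j h) = FF j h"
proof (induction j arbitrary: h)
  case 0
  show ?case by (rule Conf0)
next
  case (Suc j)
  let ?m = "Suc j"
  have finC: "\<And>S h'. S \<in> Conf j h' \<Longrightarrow> finite S" unfolding Conf_def using CF_fin by blast
  have fD2: "finite (D2 j h)" unfolding D2_def by (rule finite_SigmaI[OF Conf_finite finC])
  have fD1: "finite (D1 j h)" unfolding D1_def using Conf_finite by simp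
  have fD3: "finite (D3 j h)" using fD2 unfolding D3_def D2_def by simp
  have fD4: "finite (D4 j h)"
  proof -
    have "D4 j h \<subseteq> (SIGMA S:Conf j (Suc h). S \<times> S)" unfolding D4_def by (auto split: if_splits)
    moreover have "finite (SIGMA S:Conf j (Suc h). S \<times> S)"
      by (rule finite_SigmaI[OF Conf_finite]) (simp add: finC)
    ultimately show ?thesis by (rule finite_subset)
  qed
  have c1: "card (ins1 ?m ` D1 j h) = (if odd ?m \<and> h \<ge> 1 then FF j (h - 1) else 0)"
    using card_image[OF inj1[of j h]] Suc.IH by (simp add: D1_def)
  have c2: "card (ins2 ?m ` D2 j h) = h * FF j h"
    using card_image[OF inj2[of j h]] Suc.IH card_D2 by simp
  have c3: "card (ins3 ?m ` D3 j h) = (if odd ?m then h * FF j h else 0)"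
    using card_image[OF inj3[of j h]] Suc.IH card_D2[of j h] by (simp add: D3_def D2_def)
  have c4: "card (ins4 ?m ` D4 j h) = (if odd ?m then Suc h * h * FF j (Suc h) else 0)"
    using card_image[OF inj4[of j h]] Suc.IH card_D4 by simp
  define I1 where "I1 = ins1 ?m ` D1 j h"
  define I2 where "I2 = ins2 ?m ` D2 j h"
  define I3 where "I3 = ins3 ?m ` D3 j h"
  define I4 where "I4 = ins4 ?m ` D4 j h"
  have fI: "finite I1" "finite I2" "finite I3" "finite I4" unfolding I1_def I2_def I3_def I4_def
    using fD1 fD2 fD3 fD4 by simp_all
  have dj: "I1 \<inter> I2 = {}" "I1 \<inter> I3 = {}" "I1 \<inter> I4 = {}" "I2 \<inter> I3 = {}" "I2 \<inter> I4 = {}" "I3 \<inter> I4 = {}"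
    unfolding I1_def I2_def I3_def I4_def using img_disj[of j h] by simp_all
  have "card (I1 \<union> I2 \<union> I3 \<union> I4) = card (I1 \<union> I2 \<union> I3) + card I4"
    by (rule card_Un_disjoint) (use fI dj in auto)
  also have "card (I1 \<union> I2 \<union> I3) = card (I1 \<union> I2) + card I3"
    by (rule card_Un_disjoint) (use fI dj in auto)
  also have "card (I1 \<union> I2) = card I1 + card I2"
    by (rule card_Un_disjoint) (use fI dj in auto)
  finally have "card (Conf ?m h) = card (ins1 ?m ` D1 j h) + card (ins2 ?m ` D2 j h) + card (ins3 ?m ` D3 j h) + card (ins4 ?m ` D4 j h)"
    unfolding Conf_Suc_eq I1_def I2_def I3_def I4_def .
  also have "\<dots> = FF ?m h"
  proof (cases "odd ?m")
    case True
    then show ?thesis unfolding c1 c2 c3 c4 by (cases h) (simp_all add: algebra_simps)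
  next
    case False
    then show ?thesis unfolding c1 c2 c3 c4 by simp
  qed
  finally show ?case .
qed



lemma dok_nth: "dok ys \<longleftrightarrow> (\<forall>i. Suc i < length ys \<longrightarrow> ys ! Suc i < ys ! i \<longrightarrow> odd (ys ! i) \<and> odd (ys ! Suc i))"
proof (induction ys rule: dok.induct)
  case (1 x y r)
  show ?case
  proof
    assume a: "dok (x # y # r)"
    show "\<forall>i. Suc i < length (x # y # r) \<longrightarrow> (x # y # r) ! Suc i < (x # y # r) ! i \<longrightarrow> odd ((x # y # r) ! i) \<and> odd ((x # y # r) ! Suc i)"
    proof (intro allI impI)
      fix i assume i: "Suc i < length (x # y # r)" and d: "(x # y # r) ! Suc i < (x # y # r) ! i"
      show "odd ((x # y # r) ! i) \<and> odd ((x # y # r) ! Suc i)"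
      proof (cases i)
        case 0 then show ?thesis using a d by simp
      next
        case (Suc i')
        then show ?thesis using a d i 1 by auto
      qed
    qed
  next
    assume a: "\<forall>i. Suc i < length (x # y # r) \<longrightarrow> (x # y # r) ! Suc i < (x # y # r) ! i \<longrightarrow> odd ((x # y # r) ! i) \<and> odd ((x # y # r) ! Suc i)"
    have "y < x \<longrightarrow> odd x \<and> odd y" using a[rule_format, of 0] by simp
    moreover have "dok (y # r)" unfolding 1
    proof (intro allI impI)
      fix i assume "Suc i < length (y # r)" "(y # r) ! Suc i < (y # r) ! i"
      then show "odd ((y # r) ! i) \<and> odd ((y # r) ! Suc i)" using a[rule_format, of "Suc i"] by simp
    qed
    ultimately show "dok (x # y # r)" by simp
  qed
next
  case "2_1" then show ?case by simp
next
  case ("2_2" v) then show ?case by simp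
qed

lemma ood_cons:
  assumes oN: "odd N" and lt: "\<forall>y\<in>set ys. y < N" and ne: "ys \<noteq> []"
  shows "only_odd_odd_drops (N # ys) \<longleftrightarrow> odd (hd ys) \<and> dok ys"
proof -
  define L where "L = length ys"
  have L1: "L \<ge> 1" using ne unfolding L_def by (cases ys) auto
  have hd0: "hd ys = ys ! 0" using ne by (simp add: hd_conv_nth)
  show ?thesis
  proof
    assume a: "only_odd_odd_drops (N # ys)"
    have a': "\<And>i. i < Suc L \<Longrightarrow> (N # ys) ! (Suc i mod Suc L) < (N # ys) ! i \<Longrightarrow>
        odd ((N # ys) ! i) \<and> odd ((N # ys) ! (Suc i mod Suc L))"
      using a unfolding only_odd_odd_drops_def L_def by simp
    have "ys ! 0 < N" using lt ne by simp
    then have "odd (ys ! 0)" using a'[of 0] L1 by simp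
    moreover have "dok ys" unfolding dok_nth
    proof (intro allI impI)
      fix i assume i: "Suc i < length ys" and d: "ys ! Suc i < ys ! i"
      have "Suc (Suc i) mod Suc L = Suc (Suc i)" using i unfolding L_def by simp
      then show "odd (ys ! i) \<and> odd (ys ! Suc i)" using a'[of "Suc i"] i d unfolding L_def by simp
    qed
    ultimately show "odd (hd ys) \<and> dok ys" using hd0 by simp
  next
    assume b: "odd (hd ys) \<and> dok ys"
    have dn: "\<And>i. Suc i < L \<Longrightarrow> ys ! Suc i < ys ! i \<Longrightarrow> odd (ys ! i) \<and> odd (ys ! Suc i)"
      using b dok_nth unfolding L_def by blast
    show "only_odd_odd_drops (N # ys)" unfolding only_odd_odd_drops_def
    proof (intro allI impI)
      fix i assume i: "i < length (N # ys)" and d: "(N # ys) ! (Suc i mod length (N # ys)) < (N # ys) ! i"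
      have len: "length (N # ys) = Suc L" unfolding L_def by simp
      show "odd ((N # ys) ! i) \<and> odd ((N # ys) ! (Suc i mod length (N # ys)))"
      proof (cases i)
        case 0
        have "Suc 0 mod Suc L = 1" using L1 by simp
        then show ?thesis using 0 len oN b hd0 by simp
      next
        case (Suc i')
        show ?thesis
        proof (cases "Suc i < Suc L")
          case True
          then have "Suc i mod Suc L = Suc i" by simp
          then show ?thesis using dn[of i'] d Suc len True by simp
        next
          case False
          then have "i = L" using i len by simp
          then have "Suc i mod Suc L = 0" by simp
          moreover have "ys ! i' < N" using lt \<open>i = L\<close> Suc unfolding L_def by simp
          ultimately show ?thesis using d Suc len by simp
        qed
      qed
    qed
  qed
qed

lemma ood_rotate: "only_odd_odd_drops xs \<Longrightarrow> only_odd_odd_drops (rotate k xs)"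
proof -
  assume a: "only_odd_odd_drops xs"
  define L where "L = length xs"
  show ?thesis
  proof (cases "L = 0")
    case True then show ?thesis unfolding only_odd_odd_drops_def L_def by simp
  next
    case False
    then have L0: "L > 0" by simp
    have a': "\<And>j. j < L \<Longrightarrow> xs ! (Suc j mod L) < xs ! j \<Longrightarrow> odd (xs ! j) \<and> odd (xs ! (Suc j mod L))"
      using a unfolding only_odd_odd_drops_def L_def by simp
    show ?thesis unfolding only_odd_odd_drops_def length_rotate L_def[symmetric]
    proof (intro allI impI)
      fix i assume i: "i < L" and d: "rotate k xs ! (Suc i mod L) < rotate k xs ! i"
      define j where "j = (k + i) mod L"
      have j: "j < L" using L0 unfolding j_def by simp
      have e1: "rotate k xs ! i = xs ! j" using nth_rotate[of i xs k] i unfolding j_def L_def by simp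
      have m: "(k + Suc i mod L) mod L = Suc j mod L" unfolding j_def by (simp add: mod_add_right_eq mod_Suc_eq)
      have e2: "rotate k xs ! (Suc i mod L) = xs ! (Suc j mod L)"
        using nth_rotate[of "Suc i mod L" xs k] L0 m unfolding L_def by simp
      show "odd (rotate k xs ! i) \<and> odd (rotate k xs ! (Suc i mod L))"
        using a'[OF j] d unfolding e1 e2 by simp
    qed
  qed
qed

definition Gs :: "nat \<Rightarrow> nat list set" where "Gs M = {ys. set ys = {1..M} \<and> goodl ys}"

lemma Conf_1: "Conf M 1 = (\<lambda>ys. {ys}) ` Gs M"
proof (rule equalityI)
  show "Conf M 1 \<subseteq> (\<lambda>ys. {ys}) ` Gs M"
  proof
    fix S assume S: "S \<in> Conf M 1"
    then have SC: "S \<in> CF M" and c: "card S = 1" unfolding Conf_def by simp_all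
    from c obtain L where L: "S = {L}" by (rule card_1_singletonE)
    have g: "goodl L" using CF_goodl[OF SC] L by simp
    have "set L = {1..M}" using SC L unfolding CF_def by simp
    then show "S \<in> (\<lambda>ys. {ys}) ` Gs M" using g L unfolding Gs_def by simp
  qed
  show "(\<lambda>ys. {ys}) ` Gs M \<subseteq> Conf M 1"
  proof
    fix S assume "S \<in> (\<lambda>ys. {ys}) ` Gs M"
    then obtain ys where ys: "S = {ys}" "set ys = {1..M}" "goodl ys" unfolding Gs_def by blast
    have "{ys} \<in> CF M"
    proof (rule CF_I)
      show "\<And>L. L \<in> {ys} \<Longrightarrow> goodl L" using ys by simp
      show "\<And>L1 L2 x. L1 \<in> {ys} \<Longrightarrow> L2 \<in> {ys} \<Longrightarrow> x \<in> set L1 \<Longrightarrow> x \<in> set L2 \<Longrightarrow> L1 = L2" by simp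
      show "\<And>L x. L \<in> {ys} \<Longrightarrow> x \<in> set L \<Longrightarrow> 1 \<le> x \<and> x \<le> M" using ys by auto
      show "\<And>x. 1 \<le> x \<Longrightarrow> x \<le> M \<Longrightarrow> \<exists>L\<in>{ys}. x \<in> set L" using ys by auto
    qed
    then show "S \<in> Conf M 1" using ys unfolding Conf_def by simp
  qed
qed

lemma card_Gs: "card (Gs M) = card (Conf M 1)"
proof -
  have "inj_on (\<lambda>ys. {ys}) (Gs M)" by (rule inj_onI) simp
  then show ?thesis unfolding Conf_1 by (simp add: card_image)
qed

definition cl :: "nat \<Rightarrow> nat list \<Rightarrow> nat list set" where
  "cl N xs = {rotate k xs | k. k < N}"

lemma cycles_on_cl: "cycles_on N = cl N ` perms_list N"
  unfolding cycles_on_def cl_def by simp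

lemma cl_rotate:
  assumes len: "length xs = N" and N0: "N > 0"
  shows "cl N (rotate i xs) = cl N xs"
proof (rule equalityI)
  show "cl N (rotate i xs) \<subseteq> cl N xs"
  proof
    fix x assume "x \<in> cl N (rotate i xs)"
    then obtain k where k: "k < N" "x = rotate k (rotate i xs)" unfolding cl_def by blast
    have "x = rotate ((k + i) mod N) xs" using k len rotate_rotate[of k i xs] rotate_conv_mod[of "k + i" xs] by simp
    moreover have "(k + i) mod N < N" using N0 by simp
    ultimately show "x \<in> cl N xs" unfolding cl_def by blast
  qed
  show "cl N xs \<subseteq> cl N (rotate i xs)"
  proof
    fix x assume "x \<in> cl N xs"
    then obtain k where k: "k < N" "x = rotate k xs" unfolding cl_def by blast
    define a where "a = (k + (N - i mod N)) mod N"
    have a: "a < N" using N0 unfolding a_def by simp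
    have "(a + i) mod N = k"
    proof -
      have "(a + i) mod N = (k + (N - i mod N) + i) mod N" unfolding a_def by (simp add: mod_add_left_eq)
      also have "\<dots> = (k + (N - i mod N) + i mod N) mod N" by (simp add: mod_add_right_eq)
      also have "k + (N - i mod N) + i mod N = k + N"
      proof -
        have "i mod N < N" using N0 by simp
        then show ?thesis by linarith
      qed
      also have "(k + N) mod N = k" using k by simp
      finally show ?thesis .
    qed
    then have "rotate a (rotate i xs) = x" using k len rotate_rotate[of a i xs] rotate_conv_mod[of "a + i" xs] by simp
    then show "x \<in> cl N (rotate i xs)" using a unfolding cl_def by blast
  qed
qed

lemma main_bij:
  assumes oN: "odd N" and N2: "N \<ge> 2"
  shows "bij_betw (\<lambda>ys. cl N (N # ys)) (Gs (N - 1)) {C \<in> cycles_on N. \<forall>xs\<in>C. only_odd_odd_drops xs}"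
proof -
  have N0: "N > 0" using N2 by simp
  have setN: "insert N {1..N - 1} = {1..N}" using N2 by auto
  have Gfacts: "distinct ys \<and> N \<notin> set ys \<and> length ys = N - 1 \<and> ys \<noteq> [] \<and> odd (hd ys) \<and> dok ys \<and> (\<forall>y\<in>set ys. y < N)"
    if "ys \<in> Gs (N - 1)" for ys
  proof -
    have ys: "set ys = {1..N - 1}" "goodl ys" using that unfolding Gs_def by simp_all
    have d: "distinct ys" using ys(2) unfolding goodl_def by simp
    have "length ys = N - 1" using distinct_card[OF d] ys(1) by simp
    then show ?thesis using ys d unfolding goodl_def by auto
  qed
  have good_cons: "only_odd_odd_drops (N # ys)" if "ys \<in> Gs (N - 1)" for ys
    using ood_cons[OF oN] Gfacts[OF that] by simp
  have perm_cons: "N # ys \<in> perms_list N" if "ys \<in> Gs (N - 1)" for ys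
    using Gfacts[OF that] setN that unfolding perms_list_def Gs_def by simp
  show ?thesis
  proof (rule bij_betw_imageI)
    show "inj_on (\<lambda>ys. cl N (N # ys)) (Gs (N - 1))"
    proof (rule inj_onI)
      fix ys ys' assume y: "ys \<in> Gs (N - 1)" "ys' \<in> Gs (N - 1)" and e: "cl N (N # ys) = cl N (N # ys')"
      have "N # ys' \<in> cl N (N # ys')" unfolding cl_def
        by (rule CollectI, rule exI[of _ 0]) (simp add: N0)
      then have "N # ys' \<in> cl N (N # ys)" using e by simp
      then obtain k where k: "k < N" "N # ys' = rotate k (N # ys)" unfolding cl_def by auto
      have len: "length (N # ys) = N" using Gfacts[OF y(1)] N2 by simp
      have dist: "distinct (N # ys)" using Gfacts[OF y(1)] by simp
      have "hd (rotate k (N # ys)) = (N # ys) ! k" using hd_rotate_conv_nth[of "N # ys" k] len k by simp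
      then have "(N # ys) ! k = (N # ys) ! 0" using k(2)[symmetric] by simp
      then have "k = 0" using nth_eq_iff_index_eq[OF dist, of k 0] k len N0 by simp
      then show "ys = ys'" using k by simp
    qed
  next
    show "(\<lambda>ys. cl N (N # ys)) ` Gs (N - 1) = {C \<in> cycles_on N. \<forall>xs\<in>C. only_odd_odd_drops xs}"
    proof (rule equalityI)
      show "(\<lambda>ys. cl N (N # ys)) ` Gs (N - 1) \<subseteq> {C \<in> cycles_on N. \<forall>xs\<in>C. only_odd_odd_drops xs}"
      proof
        fix C assume "C \<in> (\<lambda>ys. cl N (N # ys)) ` Gs (N - 1)"
        then obtain ys where ys: "ys \<in> Gs (N - 1)" "C = cl N (N # ys)" by blast
        have "C \<in> cycles_on N" unfolding cycles_on_cl using ys perm_cons by blast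
        moreover have "\<forall>xs\<in>C. only_odd_odd_drops xs"
          using ys good_cons[OF ys(1)] ood_rotate unfolding cl_def by blast
        ultimately show "C \<in> {C \<in> cycles_on N. \<forall>xs\<in>C. only_odd_odd_drops xs}" by simp
      qed
      show "{C \<in> cycles_on N. \<forall>xs\<in>C. only_odd_odd_drops xs} \<subseteq> (\<lambda>ys. cl N (N # ys)) ` Gs (N - 1)"
      proof
        fix C assume C: "C \<in> {C \<in> cycles_on N. \<forall>xs\<in>C. only_odd_odd_drops xs}"
        then obtain xs where xs: "xs \<in> perms_list N" "C = cl N xs" unfolding cycles_on_cl by blast
        have dxs: "distinct xs" and sxs: "set xs = {1..N}" using xs(1) unfolding perms_list_def by simp_all
        have lxs: "length xs = N" using distinct_card[OF dxs] sxs by simp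
        have "N \<in> set xs" using sxs N0 by simp
        then obtain i where i: "i < length xs" "xs ! i = N" by (meson in_set_conv_nth)
        define zs where "zs = rotate i xs"
        have zC: "zs \<in> C" unfolding xs(2) cl_def zs_def
          by (rule CollectI, rule exI[of _ i]) (use i lxs in simp)
        have lz: "length zs = N" unfolding zs_def using lxs by simp
        have xne: "xs \<noteq> []" using lxs N0 by auto
        have hz: "hd zs = N" unfolding zs_def using hd_rotate_conv_nth[OF xne, of i] i by simp
        have zne: "zs \<noteq> []" using lz N0 by auto
        define ys where "ys = tl zs"
        have zys: "zs = N # ys" unfolding ys_def using hz zne by (cases zs) auto
        have dz: "distinct zs" and sz: "set zs = {1..N}" unfolding zs_def using dxs sxs by simp_all
        have dys: "distinct ys" and Nys: "N \<notin> set ys" using dz zys by simp_all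
        have sys: "set ys = {1..N - 1}"
        proof -
          have "insert N (set ys) = {1..N}" using sz zys by simp
          then have "set ys = {1..N} - {N}" using Nys by blast
          also have "\<dots> = {1..N - 1}" using N0 by auto
          finally show ?thesis .
        qed
        have lys: "length ys = N - 1" using lz zys by simp
        have yne: "ys \<noteq> []" using lys N2 by auto
        have ylt: "\<forall>y\<in>set ys. y < N" using sys N0 by auto
        have "only_odd_odd_drops zs" using C zC by blast
        then have "odd (hd ys) \<and> dok ys" using ood_cons[OF oN ylt yne] zys by simp
        then have "ys \<in> Gs (N - 1)" unfolding Gs_def goodl_def using sys dys yne by simp
        moreover have "C = cl N (N # ys)" using xs(2) zys cl_rotate[OF lxs N0, of i] unfolding zs_def by simp
        ultimately show "C \<in> (\<lambda>ys. cl N (N # ys)) ` Gs (N - 1)" by blast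
      qed
    qed
  qed
qed


theorem corollary1p5:
  fixes n :: nat
  assumes "n \<ge> 2"
  shows "genocchi_median (n - 2) =
         of_nat (card {C \<in> cycles_on (2 * n - 1). \<forall>xs \<in> C. only_odd_odd_drops xs})"
proof -
  define N where "N = 2 * n - 1"
  have oN: "odd N" and N2: "N \<ge> 2" using assms unfolding N_def by auto
  have NM: "N - 1 = 2 * (n - 1)" using assms unfolding N_def by simp
  have "card {C \<in> cycles_on N. \<forall>xs \<in> C. only_odd_odd_drops xs} = card (Gs (N - 1))"
    using bij_betw_same_card[OF main_bij[OF oN N2]] by simp
  also have "\<dots> = card (Conf (N - 1) 1)" by (rule card_Gs)
  also have "\<dots> = FF (2 * (n - 1)) 1" using card_Conf NM by simp
  finally have c: "card {C \<in> cycles_on N. \<forall>xs \<in> C. only_odd_odd_drops xs} = FF (2 * (n - 1)) 1" .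
  have "genocchi_median (n - 2) = GG (n - 1) 1" using median_eq[OF assms] .
  also have "\<dots> = of_nat (FF (2 * (n - 1)) 1)" unfolding GG_def ..
  finally show ?thesis using c unfolding N_def by simp
qed

end
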